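(* Let $D$ be a digraph and $X, Y \subseteq V(D)$ such that no vertex of $X$ has an ingoing edge and no vertex of $Y$ has an outgoing edge. Let $D'$ be a subdigraph of $D$ obtained by deleting finitely many vertices of $D$ and then deleting finitely many edges from the resulting digraph, with $X, Y \subseteq V(D')$. If $X$ is incompressible to $Y$ in $D'$, then $X$ is incompressible to $Y$ in $D$.
   Context: Digraphs have no loops or parallel edges. An $(A,B)$-path is a directed path whose initial vertex is in $A$, whose terminal vertex is in $B$, and which is internally disjoint from $A \cup B$; an $(A,B)$-path-system is a set of pairwise vertex-disjoint $(A,B)$-paths. $V^-(\mathcal{P})$ and $V^+(\mathcal{P})$ are the sets of initial and terminal vertices of the paths in $\mathcal{P}$. In a digraph $H$, $A$ is joinable to $B$ if there is an $(A,B)$-path-system $\mathcal{P}$ in $H$ with $V^-(\mathcal{P}) = A$; the set of such systems is $\mathfrak{J}_H(A,B)$. If $A$ is joinable to $B$ in $H$, then $A$ is incompressible to $B$ in $H$ if $V^+(\mathcal{P}) = B$ for every $\mathcal{P} \in \mathfrak{J}_H(A,B)$. *)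

theory Defs
  imports Main
begin

definition digraph :: "'a set \<Rightarrow> ('a \<times> 'a) set \<Rightarrow> bool" where
  "digraph V E \<longleftrightarrow> E \<subseteq> V \<times> V \<and> (\<forall>v. (v, v) \<notin> E)"

definition dpath :: "'a set \<Rightarrow> ('a \<times> 'a) set \<Rightarrow> 'a list \<Rightarrow> bool" where
  "dpath V E p \<longleftrightarrow> p \<noteq> [] \<and> distinct p \<and> set p \<subseteq> V \<and>
     (\<forall>i. Suc i < length p \<longrightarrow> (p ! i, p ! Suc i) \<in> E)"

definition AB_path :: "'a set \<Rightarrow> ('a \<times> 'a) set \<Rightarrow> 'a set \<Rightarrow> 'a set \<Rightarrow> 'a list \<Rightarrow> bool" where
  "AB_path V E A B p \<longleftrightarrow> dpath V E p \<and> hd p \<in> A \<and> last p \<in> B \<and>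
     (\<forall>i. 0 < i \<and> i < length p - 1 \<longrightarrow> p ! i \<notin> A \<union> B)"

definition AB_path_system :: "'a set \<Rightarrow> ('a \<times> 'a) set \<Rightarrow> 'a set \<Rightarrow> 'a set \<Rightarrow> 'a list set \<Rightarrow> bool" where
  "AB_path_system V E A B P \<longleftrightarrow> (\<forall>p\<in>P. AB_path V E A B p) \<and>
     (\<forall>p\<in>P. \<forall>q\<in>P. p \<noteq> q \<longrightarrow> set p \<inter> set q = {})"

definition Vminus :: "'a list set \<Rightarrow> 'a set" where
  "Vminus P = hd ` P"

definition Vplus :: "'a list set \<Rightarrow> 'a set" where
  "Vplus P = last ` P"

definition joinings :: "'a set \<Rightarrow> ('a \<times> 'a) set \<Rightarrow> 'a set \<Rightarrow> 'a set \<Rightarrow> 'a list set set" where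
  "joinings V E A B = {P. AB_path_system V E A B P \<and> Vminus P = A}"

definition joinable :: "'a set \<Rightarrow> ('a \<times> 'a) set \<Rightarrow> 'a set \<Rightarrow> 'a set \<Rightarrow> bool" where
  "joinable V E A B \<longleftrightarrow> joinings V E A B \<noteq> {}"

definition incompressible :: "'a set \<Rightarrow> ('a \<times> 'a) set \<Rightarrow> 'a set \<Rightarrow> 'a set \<Rightarrow> bool" where
  "incompressible V E A B \<longleftrightarrow> joinable V E A B \<and>
     (\<forall>P\<in>joinings V E A B. Vplus P = B)"

end

theory Submission
  imports Defs
begin

lemma ABp_D:
  assumes "AB_path V E A B p"
  shows "p \<noteq> []" "distinct p" "set p \<subseteq> V" "\<And>i. Suc i < length p \<Longrightarrow> (p ! i, p ! Suc i) \<in> E"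
    "hd p \<in> A" "last p \<in> B" "\<And>i. 0 < i \<Longrightarrow> i < length p - 1 \<Longrightarrow> p ! i \<notin> A \<union> B"
  using assms unfolding AB_path_def dpath_def by auto

lemma sys_unique:
  assumes "AB_path_system V E A B P" "p \<in> P" "q \<in> P" "i < length p" "j < length q" "p ! i = q ! j"
  shows "p = q \<and> i = j"
proof -
  have pq: "p = q"
  proof (rule ccontr)
    assume "p \<noteq> q"
    then have "set p \<inter> set q = {}" using assms(1-3) unfolding AB_path_system_def by blast
    moreover have "p ! i \<in> set p" "q ! j \<in> set q" using assms(4,5) by auto
    ultimately show False using assms(6) by auto
  qed
  moreover have "distinct p" using assms(1,2) unfolding AB_path_system_def AB_path_def dpath_def by auto
  ultimately show ?thesis using assms(4-6) nth_eq_iff_index_eq by metis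
qed

definition edgeP :: "'a list set \<Rightarrow> 'a \<Rightarrow> 'a \<Rightarrow> bool" where
  "edgeP P v w \<longleftrightarrow> (\<exists>p\<in>P. \<exists>i. Suc i < length p \<and> p ! i = v \<and> p ! Suc i = w)"
definition VP :: "'a list set \<Rightarrow> 'a set" where "VP P = \<Union>(set ` P)"
definition sucP :: "'a list set \<Rightarrow> 'a \<Rightarrow> 'a" where "sucP P v = (SOME w. edgeP P v w)"
definition preP :: "'a list set \<Rightarrow> 'a \<Rightarrow> 'a" where "preP P w = (SOME v. edgeP P v w)"
definition rkP :: "'a list set \<Rightarrow> 'a \<Rightarrow> nat" where
  "rkP P v = (SOME n. \<exists>p\<in>P. \<exists>i<length p. p ! i = v \<and> n = length p - Suc i)"

lemma VP_iff: "v \<in> VP P \<longleftrightarrow> (\<exists>p\<in>P. \<exists>i<length p. p ! i = v)"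
  unfolding VP_def by (auto simp: in_set_conv_nth)

locale ctx =
  fixes V :: "'a set" and E :: "('a \<times> 'a) set" and X Y :: "'a set"
  assumes dg: "digraph V E" and XV: "X \<subseteq> V"
    and src: "\<forall>x\<in>X. \<forall>u. (u, x) \<notin> E" and snk: "\<forall>y\<in>Y. \<forall>w. (y, w) \<notin> E"
begin

lemma EV: "(u, v) \<in> E \<Longrightarrow> u \<in> V \<and> v \<in> V" using dg unfolding digraph_def by auto
lemma noloop: "(u, u) \<notin> E" using dg unfolding digraph_def by auto

context
  fixes P assumes P: "AB_path_system V E X Y P"
begin

lemma Pp: "p \<in> P \<Longrightarrow> AB_path V E X Y p" using P unfolding AB_path_system_def by auto

lemma uniq: "p \<in> P \<Longrightarrow> q \<in> P \<Longrightarrow> i < length p \<Longrightarrow> j < length q \<Longrightarrow> p ! i = q ! j \<Longrightarrow> p = q \<and> i = j"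
  using sys_unique[OF P] by blast

lemma edgeP_E: "edgeP P v w \<Longrightarrow> (v, w) \<in> E"
  unfolding edgeP_def using Pp ABp_D(4) by blast

lemma edgeP_VP: "edgeP P v w \<Longrightarrow> v \<in> VP P \<and> w \<in> VP P"
  unfolding edgeP_def VP_iff by (metis Suc_lessD)

lemma edgeP_fun: "edgeP P v w \<Longrightarrow> edgeP P v w' \<Longrightarrow> w = w'"
  unfolding edgeP_def by (metis Suc_lessD uniq)

lemma edgeP_inj: "edgeP P v w \<Longrightarrow> edgeP P v' w \<Longrightarrow> v = v'"
  unfolding edgeP_def by (metis Suc_inject uniq)

lemma sucP_eq: "edgeP P v w \<Longrightarrow> sucP P v = w"
  unfolding sucP_def by (metis edgeP_fun someI)

lemma preP_eq: "edgeP P v w \<Longrightarrow> preP P w = v"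
  unfolding preP_def by (metis edgeP_inj someI)

lemma VP_suc: assumes "v \<in> VP P" "v \<notin> Y" shows "edgeP P v (sucP P v)"
proof -
  obtain p i where p: "p \<in> P" "i < length p" "p ! i = v" using assms(1) VP_iff by metis
  have "Suc i < length p"
  proof (rule ccontr)
    assume "\<not> Suc i < length p"
    then have "i = length p - 1" using p by auto
    then have "v = last p" using p ABp_D(1)[OF Pp[OF p(1)]] by (simp add: last_conv_nth)
    then show False using ABp_D(6)[OF Pp[OF p(1)]] assms(2) by auto
  qed
  then have "edgeP P v (p ! Suc i)" unfolding edgeP_def using p by blast
  then show ?thesis using sucP_eq by simp
qed

lemma VP_pre: assumes "w \<in> VP P" "w \<notin> X" shows "edgeP P (preP P w) w"
proof -
  obtain p i where p: "p \<in> P" "i < length p" "p ! i = w" using assms(1) VP_iff by metis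
  have "i \<noteq> 0"
  proof
    assume "i = 0"
    then have "w = hd p" using p by (simp add: hd_conv_nth)
    then show False using ABp_D(5)[OF Pp[OF p(1)]] assms(2) by auto
  qed
  then have "edgeP P (p ! (i - 1)) w" unfolding edgeP_def using p
    by (metis Suc_pred' bot_nat_0.not_eq_extremum)
  then show ?thesis using preP_eq by simp
qed

lemma VP_Y: assumes "v \<in> VP P" "v \<in> Y" shows "v \<in> Vplus P"
proof -
  obtain p i where p: "p \<in> P" "i < length p" "p ! i = v" using assms(1) VP_iff by metis
  have "\<not> Suc i < length p"
  proof
    assume "Suc i < length p"
    then have "(v, p ! Suc i) \<in> E" using ABp_D(4)[OF Pp[OF p(1)]] p by auto
    then show False using snk assms(2) by auto
  qed
  then have "i = length p - 1" using p by auto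
  then have "v = last p" using p ABp_D(1)[OF Pp[OF p(1)]] by (simp add: last_conv_nth)
  then show ?thesis unfolding Vplus_def using p by auto
qed

lemma VP_X: assumes "v \<in> VP P" "v \<in> X" shows "v \<in> Vminus P"
proof -
  obtain p i where p: "p \<in> P" "i < length p" "p ! i = v" using assms(1) VP_iff by metis
  have "i = 0"
  proof (rule ccontr)
    assume "i \<noteq> 0"
    then have "(p ! (i - 1), v) \<in> E" using ABp_D(4)[OF Pp[OF p(1)], of "i - 1"] p by auto
    then show False using src assms(2) by auto
  qed
  then have "v = hd p" using p by (simp add: hd_conv_nth)
  then show ?thesis unfolding Vminus_def using p by auto
qed

lemma Vminus_VP: "Vminus P \<subseteq> VP P"
  unfolding Vminus_def VP_def using Pp ABp_D(1) by fastforce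

lemma Vplus_VP: "Vplus P \<subseteq> VP P"
  unfolding Vplus_def VP_def using Pp ABp_D(1) by fastforce

lemma VP_V: "VP P \<subseteq> V" unfolding VP_def using Pp ABp_D(3) by blast

lemma rk_eq: assumes "p \<in> P" "i < length p" shows "rkP P (p ! i) = length p - Suc i"
proof -
  have "\<exists>n. \<exists>p'\<in>P. \<exists>i'<length p'. p' ! i' = p ! i \<and> n = length p' - Suc i'"
    using assms by blast
  then have "\<exists>p'\<in>P. \<exists>i'<length p'. p' ! i' = p ! i \<and> rkP P (p ! i) = length p' - Suc i'"
    unfolding rkP_def by (rule someI_ex)
  then show ?thesis using uniq assms by metis
qed

lemma edgeP_rk: "edgeP P v w \<Longrightarrow> rkP P w < rkP P v"
  unfolding edgeP_def using rk_eq by (metis Suc_lessD diff_less_mono2 lessI)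

end


end

locale orb = ctx +
  fixes f :: "'a \<Rightarrow> 'a" and G :: "'a set"
  assumes cl: "\<And>v. v \<in> G \<Longrightarrow> v \<notin> Y \<Longrightarrow> (v, f v) \<in> E \<and> f v \<in> G"
    and inj: "\<And>v v'. v \<in> G \<Longrightarrow> v' \<in> G \<Longrightarrow> v \<notin> Y \<Longrightarrow> v' \<notin> Y \<Longrightarrow> f v = f v' \<Longrightarrow> v = v'"
begin

lemma orbit_G: "x \<in> G \<Longrightarrow> (\<forall>k<i. (f^^k) x \<notin> Y) \<Longrightarrow> (f^^i) x \<in> G"
proof (induction i)
  case 0 then show ?case by simp
next
  case (Suc i)
  then have "(f^^i) x \<in> G" "(f^^i) x \<notin> Y" by auto
  then show ?case using cl by simp
qed

lemma orbit_E: "x \<in> G \<Longrightarrow> (\<forall>k\<le>i. (f^^k) x \<notin> Y) \<Longrightarrow> ((f^^i) x, (f^^Suc i) x) \<in> E"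
  using orbit_G[of x i] cl by auto

lemma backtrack:
  "x \<in> G \<Longrightarrow> x' \<in> G \<Longrightarrow> \<forall>k<i. (f^^k) x \<notin> Y \<Longrightarrow> \<forall>k<j. (f^^k) x' \<notin> Y \<Longrightarrow> i \<le> j
   \<Longrightarrow> (f^^i) x = (f^^j) x' \<Longrightarrow> x = (f^^(j - i)) x'"
proof (induction i arbitrary: j)
  case 0 then show ?case by simp
next
  case (Suc i)
  then obtain j' where j: "j = Suc j'" by (cases j) auto
  have "(f^^i) x \<in> G" "(f^^j') x' \<in> G" using orbit_G Suc.prems j by auto
  moreover have "(f^^i) x \<notin> Y" "(f^^j') x' \<notin> Y" using Suc.prems j by auto
  moreover have "f ((f^^i) x) = f ((f^^j') x')" using Suc.prems(6) j by simp
  ultimately have "(f^^i) x = (f^^j') x'" using inj by blast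
  then have "x = (f^^(j' - i)) x'" using Suc.IH[of j'] Suc.prems j by auto
  then show ?case using j by simp
qed

lemma orbit_src: "x \<in> X \<Longrightarrow> x' \<in> G \<Longrightarrow> \<forall>k<m. (f^^k) x' \<notin> Y \<Longrightarrow> x = (f^^m) x' \<Longrightarrow> m = 0"
proof (rule ccontr)
  assume a: "x \<in> X" "x' \<in> G" "\<forall>k<m. (f^^k) x' \<notin> Y" "x = (f^^m) x'" "m \<noteq> 0"
  then obtain m' where m: "m = Suc m'" by (cases m) auto
  have "((f^^m') x', (f^^Suc m') x') \<in> E" using orbit_E[of x' m'] a m by auto
  then show False using src a m by auto
qed

lemma extract_sys:
  assumes St: "St \<subseteq> X" "St \<subseteq> G"
    and trm: "\<And>x. x \<in> St \<Longrightarrow> \<exists>n. (f^^n) x \<in> Y"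
    and ends: "\<And>v. v \<in> G \<Longrightarrow> v \<notin> Y \<Longrightarrow> f v \<in> Y \<Longrightarrow> f v \<in> W" "St \<inter> Y \<subseteq> W"
  shows "\<exists>T. AB_path_system V E X Y T \<and> Vminus T = St \<and> Vplus T \<subseteq> W"
proof -
  define N where "N x = (LEAST n. (f^^n) x \<in> Y)" for x
  define pth where "pth x = map (\<lambda>i. (f^^i) x) [0..<Suc (N x)]" for x
  have NY: "(f^^N x) x \<in> Y" if "x \<in> St" for x
    unfolding N_def using trm[OF that] by (rule LeastI_ex)
  have NnY: "\<forall>k<N x. (f^^k) x \<notin> Y" for x
    unfolding N_def using not_less_Least by blast
  have len: "length (pth x) = Suc (N x)" for x unfolding pth_def by simp
  have nth: "i < Suc (N x) \<Longrightarrow> pth x ! i = (f^^i) x" for x i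
    unfolding pth_def by (simp del: upt_Suc)
  have xG: "x \<in> G" "x \<in> X" if "x \<in> St" for x using St that by auto
  have same: "x = x' \<and> i = j" if "x \<in> St" "x' \<in> St" "i \<le> N x" "j \<le> N x'"
      "(f^^i) x = (f^^j) x'" for x x' i j
  proof -
    have A: "x = x' \<and> i = j" if "x \<in> St" "x' \<in> St" "i \<le> N x" "j \<le> N x'"
      "(f^^i) x = (f^^j) x'" "i \<le> j" for x x' i j
    proof -
      have k1: "\<forall>k<i. (f^^k) x \<notin> Y" using NnY[of x] that(3) by simp
      have k2: "\<forall>k<j. (f^^k) x' \<notin> Y" using NnY[of x'] that(4) by simp
      have k3: "\<forall>k<j - i. (f^^k) x' \<notin> Y" using k2 by simp
      have e: "x = (f^^(j - i)) x'"
        using backtrack[OF xG(1)[OF that(1)] xG(1)[OF that(2)] k1 k2 that(6) that(5)] .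
      have "j - i = 0"
        using orbit_src[OF xG(2)[OF that(1)] xG(1)[OF that(2)] k3 e] .
      then show ?thesis using e that(6) by simp
    qed
    show ?thesis
    proof (cases "i \<le> j")
      case True then show ?thesis using A that by blast
    next
      case False then show ?thesis using A[of x' x j i] that by auto
    qed
  qed
  have ABp: "AB_path V E X Y (pth x)" if x: "x \<in> St" for x
  proof -
    have ne: "pth x \<noteq> []" using len by (metis Zero_not_Suc list.size(3))
    have dist: "distinct (pth x)"
      unfolding distinct_conv_nth len
    proof (intro allI impI)
      fix i j assume ij: "i < Suc (N x)" "j < Suc (N x)" "i \<noteq> j"
      show "pth x ! i \<noteq> pth x ! j"
      proof
        assume "pth x ! i = pth x ! j"
        then have "(f^^i) x = (f^^j) x" using nth ij by simp
        then show False using same[OF x x, of i j] ij by simp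
      qed
    qed
    have ed: "(pth x ! i, pth x ! Suc i) \<in> E" if "Suc i < length (pth x)" for i
    proof -
      have "\<forall>k\<le>i. (f^^k) x \<notin> Y" using NnY[of x] that len by simp
      then have "((f^^i) x, (f^^Suc i) x) \<in> E" using orbit_E xG[OF x] by blast
      then show ?thesis using nth that len by simp
    qed
    have inV: "set (pth x) \<subseteq> V"
    proof
      fix v assume "v \<in> set (pth x)"
      then obtain i where i: "i < length (pth x)" "pth x ! i = v" by (auto simp: in_set_conv_nth)
      show "v \<in> V"
      proof (cases i)
        case 0 then show ?thesis using i nth XV xG[OF x] by auto
      next
        case (Suc i') then show ?thesis using ed[of i'] i EV by auto
      qed
    qed
    have hd: "hd (pth x) = x" using nth[of 0 x] ne by (simp add: hd_conv_nth)
    have lst: "last (pth x) = (f^^N x) x" using nth[of "N x" x] ne len by (simp add: last_conv_nth)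
    have int: "pth x ! i \<notin> X \<union> Y" if "0 < i" "i < length (pth x) - 1" for i
    proof -
      have "pth x ! i \<notin> Y" using NnY that nth len by auto
      moreover have "pth x ! i \<notin> X"
      proof
        assume "pth x ! i \<in> X"
        moreover have "(pth x ! (i - 1), pth x ! i) \<in> E" using ed[of "i - 1"] that by auto
        ultimately show False using src by auto
      qed
      ultimately show ?thesis by auto
    qed
    show ?thesis unfolding AB_path_def dpath_def
      using ne dist inV ed hd lst int xG[OF x] NY[OF x] by auto
  qed
  define T where "T = pth ` St"
  have sys: "AB_path_system V E X Y T"
    unfolding AB_path_system_def T_def
  proof (intro conjI ballI impI)
    fix p assume "p \<in> pth ` St" then show "AB_path V E X Y p" using ABp by auto
  next
    fix p q assume pq: "p \<in> pth ` St" "q \<in> pth ` St" "p \<noteq> q"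
    then obtain x x' where xx: "x \<in> St" "x' \<in> St" "p = pth x" "q = pth x'" by auto
    show "set p \<inter> set q = {}"
    proof (rule ccontr)
      assume "set p \<inter> set q \<noteq> {}"
      then obtain v where "v \<in> set (pth x)" "v \<in> set (pth x')" using xx by auto
      then obtain i j where "i < Suc (N x)" "pth x ! i = v" "j < Suc (N x')" "pth x' ! j = v"
        by (auto simp: in_set_conv_nth len)
      then have "x = x'" using same[OF xx(1,2), of i j] nth by auto
      then show False using pq xx by auto
    qed
  qed
  have hdp: "hd (pth x) = x" for x
  proof -
    have "pth x \<noteq> []" using len[of x] by auto
    then have "hd (pth x) = pth x ! 0" by (simp add: hd_conv_nth)
    then show ?thesis using nth[of 0 x] by simp
  qed
  have "Vminus T = St" unfolding Vminus_def T_def image_image hdp by simp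
  moreover have "Vplus T \<subseteq> W"
  proof
    fix y assume "y \<in> Vplus T"
    then obtain x where x: "x \<in> St" "y = last (pth x)" unfolding Vplus_def T_def by auto
    have "pth x \<noteq> []" using len[of x] by auto
    then have "last (pth x) = pth x ! N x" using len[of x] by (simp add: last_conv_nth)
    then have y: "y = (f^^N x) x" using x nth[of "N x" x] by simp
    show "y \<in> W"
    proof (cases "N x")
      case 0 then show ?thesis using y x NY[OF x(1)] ends(2) by auto
    next
      case (Suc m)
      have "(f^^m) x \<in> G" using orbit_G[of x m] xG[OF x(1)] NnY[of x] Suc by auto
      moreover have "(f^^m) x \<notin> Y" using NnY[of x] Suc by auto
      moreover have "f ((f^^m) x) = y" using y Suc by simp
      moreover have "f ((f^^m) x) \<in> Y" using NY[OF x(1)] Suc by simp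
      ultimately show ?thesis using ends(1)[of "(f^^m) x"] y by simp
    qed
  qed
  ultimately show ?thesis using sys by blast
qed

end

locale aug = ctx +
  fixes Q R :: "'a list set" and X1 :: "'a set"
  assumes Qj: "Q \<in> joinings V E X Y" and Rs: "AB_path_system V E X Y R"
    and RX: "Vminus R = X - X1" and X1X: "X1 \<subseteq> X"
begin

lemma Qs: "AB_path_system V E X Y Q" and QX: "Vminus Q = X"
  using Qj unfolding joinings_def by auto

abbreviation "VR \<equiv> VP R"
abbreviation "VQ \<equiv> VP Q"

lemma X1_VR: "x \<in> X1 \<Longrightarrow> x \<notin> VR"
  using VP_X[OF Rs] RX X1X by blast

lemma X_VQ: "X \<subseteq> VQ" using Vminus_VP[OF Qs] QX by simp

lemma XmX1_VR: "X - X1 \<subseteq> VR" using Vminus_VP[OF Rs] RX by simp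

definition step_ok :: "'a \<Rightarrow> 'a \<Rightarrow> bool" where
  "step_ok u b \<longleftrightarrow> ((u, b) \<in> E \<and> \<not> edgeP R u b) \<or> (b = u \<and> u \<in> VR \<and> u \<notin> X \<and> u \<notin> Y)"
definition cont_ok :: "'a \<Rightarrow> bool" where "cont_ok b \<longleftrightarrow> b \<in> VR \<or> b \<notin> Y"
definition mR :: "'a \<Rightarrow> 'a" where "mR b = (if b \<in> VR then preP R b else b)"
definition walk :: "nat \<Rightarrow> (nat \<Rightarrow> 'a) \<Rightarrow> (nat \<Rightarrow> 'a) \<Rightarrow> bool" where
  "walk n u a \<longleftrightarrow> u 0 \<in> X1 \<and> (\<forall>k\<le>n. step_ok (u k) (a k)) \<and>
     (\<forall>k<n. cont_ok (a k) \<and> u (Suc k) = mR (a k))"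
definition InReach :: "'a \<Rightarrow> bool" where "InReach b \<longleftrightarrow> (\<exists>n u a. walk n u a \<and> a n = b)"
definition Reach :: "'a \<Rightarrow> bool" where
  "Reach v \<longleftrightarrow> v \<in> X1 \<or> (\<exists>b. InReach b \<and> cont_ok b \<and> v = mR b)"
definition success :: bool where
  "success \<longleftrightarrow> (\<exists>n u a. walk n u a \<and> a n \<in> Y \<and> a n \<notin> VR)"

lemma step_notX: "step_ok u b \<Longrightarrow> b \<notin> X"
  unfolding step_ok_def using src by auto

lemma step_notY: "step_ok u b \<Longrightarrow> u \<notin> Y"
  unfolding step_ok_def using snk by auto

lemma step_ne: "step_ok u b \<Longrightarrow> b \<noteq> u \<Longrightarrow> (u, b) \<in> E \<and> \<not> edgeP R u b"
  unfolding step_ok_def by auto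

lemma step_eq: "step_ok u u \<Longrightarrow> u \<in> VR \<and> u \<notin> X"
  unfolding step_ok_def using noloop by auto

lemma mR_edge: "b \<in> VR \<Longrightarrow> b \<notin> X \<Longrightarrow> edgeP R (mR b) b"
  unfolding mR_def using VP_pre[OF Rs] by simp

lemma mR_inj: assumes "b \<notin> X" "b' \<notin> X" "mR b = mR b'" shows "b = b'"
proof (cases "b \<in> VR")
  case True
  note e = mR_edge[OF True assms(1)]
  show ?thesis
  proof (cases "b' \<in> VR")
    case True
    note e' = mR_edge[OF True assms(2)]
    show ?thesis using e e' assms(3) edgeP_fun[OF Rs] by metis
  next
    case False
    then have "mR b' = b'" unfolding mR_def by simp
    then show ?thesis using e edgeP_VP[OF Rs] False assms(3) by metis
  qed
next
  case False
  then have b: "mR b = b" unfolding mR_def by simp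
  show ?thesis
  proof (cases "b' \<in> VR")
    case True
    note e' = mR_edge[OF True assms(2)]
    then show ?thesis using b edgeP_VP[OF Rs] False assms(3) by metis
  next
    case False
    then show ?thesis using b assms(3) unfolding mR_def by simp
  qed
qed

lemma mR_notY: "cont_ok b \<Longrightarrow> b \<notin> X \<Longrightarrow> mR b \<notin> Y"
proof -
  assume c: "cont_ok b" "b \<notin> X"
  show ?thesis
  proof (cases "b \<in> VR")
    case True
    then have "(mR b, b) \<in> E" using mR_edge c edgeP_E[OF Rs] by blast
    then show ?thesis using snk by auto
  next
    case False then show ?thesis using c unfolding cont_ok_def mR_def by simp
  qed
qed

lemma mR_X1: "cont_ok b \<Longrightarrow> b \<notin> X \<Longrightarrow> mR b \<notin> X1"
proof -
  assume c: "cont_ok b" "b \<notin> X"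
  show ?thesis
  proof (cases "b \<in> VR")
    case True
    then have "mR b \<in> VR" using mR_edge c edgeP_VP[OF Rs] by blast
    then show ?thesis using X1_VR by auto
  next
    case False then show ?thesis using c X1X unfolding mR_def by auto
  qed
qed

lemma InReach_notX: "InReach b \<Longrightarrow> b \<notin> X"
  unfolding InReach_def walk_def using step_notX by blast

lemma Reach_step: assumes "Reach v" "step_ok v b" shows "InReach b"
proof -
  consider "v \<in> X1" | b' where "InReach b'" "cont_ok b'" "v = mR b'"
    using assms(1) unfolding Reach_def by blast
  then show ?thesis
  proof cases
    case 1
    have "walk 0 (\<lambda>_. v) (\<lambda>_. b)" unfolding walk_def using 1 assms(2) by simp
    then show ?thesis unfolding InReach_def by blast
  next
    case 2
    then obtain n u a where w: "walk n u a" "a n = b'" unfolding InReach_def by blast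
    define u' where "u' = u(Suc n := v)"
    define a' where "a' = a(Suc n := b)"
    have "walk (Suc n) u' a'"
      unfolding walk_def
    proof (intro conjI allI impI)
      show "u' 0 \<in> X1" using w unfolding walk_def u'_def by simp
    next
      fix k assume "k \<le> Suc n"
      then show "step_ok (u' k) (a' k)"
        using w assms(2) unfolding walk_def u'_def a'_def by (cases "k = Suc n") auto
    next
      fix k assume k: "k < Suc n"
      show "cont_ok (a' k)" using w k 2 unfolding walk_def a'_def by (cases "k = n") auto
      show "u' (Suc k) = mR (a' k)" using w k 2 unfolding walk_def a'_def u'_def
        by (cases "k = n") auto
    qed
    moreover have "a' (Suc n) = b" unfolding a'_def by simp
    ultimately show ?thesis unfolding InReach_def by blast
  qed
qed

lemma Reach_notY: "Reach v \<Longrightarrow> v \<notin> X1 \<Longrightarrow> v \<notin> Y"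
  unfolding Reach_def using mR_notY InReach_notX by blast

lemma InReach_Reach: "InReach b \<Longrightarrow> cont_ok b \<Longrightarrow> Reach (mR b)"
  unfolding Reach_def by blast

lemma Reach_pre: assumes "Reach v" "v \<in> VR" "v \<notin> X" shows "Reach (preP R v)"
proof -
  have "v \<notin> Y" using Reach_notY assms X1_VR by blast
  then have "step_ok v v" unfolding step_ok_def using assms by simp
  then have "InReach v" using Reach_step assms(1) by blast
  then have "Reach (mR v)" using InReach_Reach assms(2) unfolding cont_ok_def by blast
  then show ?thesis using assms(2) unfolding mR_def by simp
qed

lemma path_notX: "r \<in> R \<Longrightarrow> 0 < i \<Longrightarrow> i < length r \<Longrightarrow> r ! i \<notin> X"
proof
  assume a: "r \<in> R" "0 < i" "i < length r" "r ! i \<in> X"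
  have "(r ! (i - 1), r ! i) \<in> E" using ABp_D(4)[OF Pp[OF Rs a(1)], of "i - 1"] a by auto
  then show False using src a by auto
qed

lemma pre_path: "r \<in> R \<Longrightarrow> Suc i < length r \<Longrightarrow> preP R (r ! Suc i) = r ! i"
  using preP_eq[OF Rs] unfolding edgeP_def by blast

lemma suc_path: "r \<in> R \<Longrightarrow> Suc i < length r \<Longrightarrow> sucP R (r ! i) = r ! Suc i"
  using sucP_eq[OF Rs] unfolding edgeP_def by blast

lemma edgeP_path: assumes "edgeP P v w" "AB_path_system V E X Y P"
  shows "\<exists>p\<in>P. \<exists>i. Suc i < length p \<and> p ! i = v \<and> p ! Suc i = w"
  using assms unfolding edgeP_def by blast

lemma Reach_prefix: "r \<in> R \<Longrightarrow> i < length r \<Longrightarrow> Reach (r ! i) \<Longrightarrow> j \<le> i \<Longrightarrow> Reach (r ! j)"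
proof (induction i arbitrary: j)
  case 0 then show ?case by simp
next
  case (Suc i)
  show ?case
  proof (cases "j = Suc i")
    case True then show ?thesis using Suc by simp
  next
    case False
    have "r ! Suc i \<in> VR" using Suc.prems unfolding VP_iff by blast
    moreover have "r ! Suc i \<notin> X" using path_notX Suc.prems by blast
    ultimately have "Reach (preP R (r ! Suc i))" using Reach_pre Suc.prems by blast
    then have "Reach (r ! i)" using pre_path Suc.prems by simp
    then show ?thesis using Suc.IH[of j] Suc.prems False by simp
  qed
qed

lemma InReach_pre: assumes "InReach b" "b \<in> VR" shows "Reach (preP R b)"
  using InReach_Reach[OF assms(1)] assms(2) unfolding cont_ok_def mR_def by simp

end

context aug begin

definition visited :: "'a \<Rightarrow> bool" where "visited v \<longleftrightarrow> Reach v \<or> InReach v"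
definition zi :: "'a list \<Rightarrow> nat" where
  "zi r = (if \<exists>i<length r. visited (r ! i) then GREATEST i. i < length r \<and> visited (r ! i) else 0)"
definition Zs :: "'a set" where "Zs = (\<lambda>r. r ! zi r) ` R"
definition Lower :: "'a \<Rightarrow> bool" where "Lower v \<longleftrightarrow> visited v \<and> v \<notin> Zs"

lemma Rne: "r \<in> R \<Longrightarrow> r \<noteq> []" using ABp_D(1)[OF Pp[OF Rs]] by blast

lemma zi_lt: assumes "r \<in> R" shows "zi r < length r"
proof (cases "\<exists>i<length r. visited (r ! i)")
  case True
  then have "(GREATEST i. i < length r \<and> visited (r ! i)) < length r"
    using GreatestI_ex_nat[of "\<lambda>i. i < length r \<and> visited (r ! i)" "length r"] by auto
  then show ?thesis unfolding zi_def using True by simp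
next
  case False
  then have "zi r = 0" unfolding zi_def using False by (simp only: if_not_P[OF False] if_False)
  then show ?thesis using Rne[OF assms] by simp
qed

lemma vis_le: assumes "r \<in> R" "i < length r" "visited (r ! i)" shows "i \<le> zi r"
proof -
  have "i \<le> (GREATEST i. i < length r \<and> visited (r ! i))"
    using Greatest_le_nat[of "\<lambda>i. i < length r \<and> visited (r ! i)" i "length r"] assms by auto
  then show ?thesis unfolding zi_def using assms by auto
qed

lemma below_reach: assumes "r \<in> R" "i < zi r" shows "Reach (r ! i)"
proof (cases "\<exists>i<length r. visited (r ! i)")
  case True
  let ?z = "zi r"
  have zv: "visited (r ! ?z)" unfolding zi_def using True
    GreatestI_ex_nat[of "\<lambda>i. i < length r \<and> visited (r ! i)" "length r"] by auto
  have zl: "?z < length r" using zi_lt assms by blast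
  show ?thesis
  proof (cases "Reach (r ! ?z)")
    case True then show ?thesis using Reach_prefix[OF assms(1) zl] assms by simp
  next
    case False
    then have ir: "InReach (r ! ?z)" using zv unfolding visited_def by simp
    have z0: "?z \<noteq> 0"
    proof
      assume "?z = 0"
      then have "r ! ?z = hd r" using Rne[OF assms(1)] by (simp add: hd_conv_nth)
      then have "r ! ?z \<in> X" using ABp_D(5)[OF Pp[OF Rs assms(1)]] by simp
      then show False using InReach_notX ir by blast
    qed
    have "r ! ?z \<in> VR" using zl assms(1) unfolding VP_iff by blast
    then have "Reach (preP R (r ! ?z))" using InReach_pre ir by blast
    moreover have "preP R (r ! ?z) = r ! (?z - 1)" using pre_path[OF assms(1), of "?z - 1"] z0 zl by simp
    ultimately have "Reach (r ! (?z - 1))" by simp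
    then show ?thesis using Reach_prefix[OF assms(1), of "?z - 1" i] zl assms by simp
  qed
next
  case False
  then have "zi r = 0" unfolding zi_def using False by (simp only: if_not_P[OF False] if_False)
  then show ?thesis using assms by simp
qed

lemma Z_on: assumes "r \<in> R" "i < length r" "r ! i \<in> Zs" shows "i = zi r"
proof -
  obtain r' where r': "r' \<in> R" "r ! i = r' ! zi r'" using assms(3) unfolding Zs_def by auto
  then show ?thesis using uniq[OF Rs assms(1) r'(1) assms(2) zi_lt[OF r'(1)]] by simp
qed

lemma Z_VR: "Zs \<subseteq> VR"
proof
  fix v assume "v \<in> Zs"
  then obtain r where "r \<in> R" "v = r ! zi r" unfolding Zs_def by auto
  then show "v \<in> VR" unfolding VP_iff using zi_lt by blast
qed

lemma lowR: assumes "r \<in> R" "i < length r" "Lower (r ! i)" shows "i < zi r"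
proof -
  have "i \<le> zi r" using vis_le assms unfolding Lower_def by blast
  moreover have "i \<noteq> zi r" using assms unfolding Lower_def Zs_def by auto
  ultimately show ?thesis by simp
qed

lemma below_lower: assumes "r \<in> R" "i < zi r" shows "Lower (r ! i)"
proof -
  have "visited (r ! i)" using below_reach assms unfolding visited_def by blast
  moreover have "r ! i \<notin> Zs"
  proof
    assume "r ! i \<in> Zs"
    moreover have "i < length r" using assms zi_lt[OF assms(1)] by simp
    ultimately have "i = zi r" using Z_on assms(1) by blast
    then show False using assms by simp
  qed
  ultimately show ?thesis unfolding Lower_def by simp
qed

context
  assumes nosucc: "\<not> success" and X1Y: "X1 \<inter> Y = {}"
begin

lemma Lower_notY: assumes "Lower v" shows "v \<notin> Y"
proof (cases "v \<in> VR")
  case True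
  then obtain r i where ri: "r \<in> R" "i < length r" "r ! i = v" unfolding VP_iff by blast
  have "i < zi r" using lowR ri assms by blast
  then have "Suc i < length r" using zi_lt[OF ri(1)] by simp
  then have "(v, r ! Suc i) \<in> E" using ABp_D(4)[OF Pp[OF Rs ri(1)]] ri by blast
  then show ?thesis using snk by auto
next
  case False
  have "visited v" using assms unfolding Lower_def by simp
  then consider "Reach v" | "InReach v" unfolding visited_def by blast
  then show ?thesis
  proof cases
    case 1
    then show ?thesis using Reach_notY X1Y by blast
  next
    case 2
    then obtain n u a where "walk n u a" "a n = v" unfolding InReach_def by blast
    then show ?thesis using nosucc False unfolding success_def by blast
  qed
qed

lemma Lower_Reach: assumes "Lower v" shows "Reach v"
proof (cases "v \<in> VR")
  case True
  then obtain r i where ri: "r \<in> R" "i < length r" "r ! i = v" unfolding VP_iff by blast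
  have "i < zi r" using lowR ri assms by blast
  then show ?thesis using below_reach ri by blast
next
  case False
  have "visited v" using assms unfolding Lower_def by simp
  moreover have "InReach v \<Longrightarrow> Reach v"
    using InReach_Reach[of v] Lower_notY[OF assms] False unfolding cont_ok_def mR_def by simp
  ultimately show ?thesis unfolding visited_def by blast
qed

lemma lowering: assumes "(a, b) \<in> E" "Lower a" shows "Lower b \<or> b \<in> Zs"
proof (cases "edgeP R a b")
  case True
  then obtain r i where ri: "r \<in> R" "Suc i < length r" "r ! i = a" "r ! Suc i = b"
    unfolding edgeP_def by blast
  have "i < zi r" using lowR ri assms(2) by simp
  then consider "Suc i = zi r" | "Suc i < zi r" by linarith
  then show ?thesis
  proof cases
    case 1 then show ?thesis unfolding Zs_def using ri by auto
  next
    case 2 then show ?thesis using below_lower ri by blast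
  qed
next
  case False
  then have "step_ok a b" unfolding step_ok_def using assms by simp
  then have "InReach b" using Reach_step Lower_Reach assms by blast
  then show ?thesis unfolding Lower_def visited_def by blast
qed

definition fT :: "'a \<Rightarrow> 'a" where "fT v = (if Lower v then sucP Q v else sucP R v)"
definition GT :: "'a set" where "GT = {v. Lower v \<and> v \<in> VQ} \<union> {v. \<not> Lower v \<and> v \<in> VR}"

lemma nonlower_step: assumes "edgeP R v w" "Lower w" shows "Lower v"
proof -
  obtain r i where ri: "r \<in> R" "Suc i < length r" "r ! i = v" "r ! Suc i = w"
    using assms(1) unfolding edgeP_def by blast
  have "Suc i < zi r" using lowR ri assms(2) by simp
  then show ?thesis using below_lower ri by auto
qed

lemma Z_step: assumes "edgeP R v w" "w \<in> Zs" shows "Lower v"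
proof -
  obtain r i where ri: "r \<in> R" "Suc i < length r" "r ! i = v" "r ! Suc i = w"
    using assms(1) unfolding edgeP_def by blast
  have "Suc i = zi r" using Z_on ri assms(2) by simp
  then show ?thesis using below_lower ri by auto
qed

lemma GT_cl: assumes "v \<in> GT" "v \<notin> Y" shows "(v, fT v) \<in> E \<and> fT v \<in> GT"
proof (cases "Lower v")
  case True
  then have vq: "v \<in> VQ" using assms unfolding GT_def by simp
  have e: "edgeP Q v (sucP Q v)" using VP_suc[OF Qs vq assms(2)] .
  have E: "(v, sucP Q v) \<in> E" using edgeP_E[OF Qs e] .
  have wq: "sucP Q v \<in> VQ" using edgeP_VP[OF Qs e] by simp
  have "Lower (sucP Q v) \<or> sucP Q v \<in> Zs" using lowering E True by blast
  then have "sucP Q v \<in> GT" unfolding GT_def using wq Z_VR Lower_def by auto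
  then show ?thesis using E True unfolding fT_def by simp
next
  case False
  then have vr: "v \<in> VR" using assms unfolding GT_def by simp
  have e: "edgeP R v (sucP R v)" using VP_suc[OF Rs vr assms(2)] .
  have E: "(v, sucP R v) \<in> E" using edgeP_E[OF Rs e] .
  have wr: "sucP R v \<in> VR" using edgeP_VP[OF Rs e] by simp
  have "\<not> Lower (sucP R v)" using nonlower_step e False by blast
  then have "sucP R v \<in> GT" unfolding GT_def using wr by simp
  then show ?thesis using E False unfolding fT_def by simp
qed

lemma GT_inj: assumes "v \<in> GT" "v' \<in> GT" "v \<notin> Y" "v' \<notin> Y" "fT v = fT v'" shows "v = v'"
proof -
  have mixed: False if "Lower v" "\<not> Lower v'" "v \<in> GT" "v' \<in> GT" "v \<notin> Y" "v' \<notin> Y" "fT v = fT v'"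
    for v v'
  proof -
    have vq: "v \<in> VQ" using that unfolding GT_def by simp
    have vr: "v' \<in> VR" using that unfolding GT_def by simp
    have e: "edgeP Q v (sucP Q v)" using VP_suc[OF Qs vq that(5)] .
    have e': "edgeP R v' (sucP R v')" using VP_suc[OF Rs vr that(6)] .
    have eq: "sucP Q v = sucP R v'" using that unfolding fT_def by simp
    have "Lower (sucP Q v) \<or> sucP Q v \<in> Zs" using lowering edgeP_E[OF Qs e] that(1) by blast
    then have "Lower v'" using nonlower_step Z_step e' eq by metis
    then show False using that by simp
  qed
  show ?thesis
  proof (cases "Lower v")
    case True
    show ?thesis
    proof (cases "Lower v'")
      case True
      have "edgeP Q v (sucP Q v)" "edgeP Q v' (sucP Q v')"
        using VP_suc[OF Qs] assms \<open>Lower v\<close> True unfolding GT_def by auto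
      then show ?thesis using edgeP_inj[OF Qs] assms(5) \<open>Lower v\<close> True unfolding fT_def by metis
    next
      case False then show ?thesis using mixed[of v v'] True assms by blast
    qed
  next
    case False
    show ?thesis
    proof (cases "Lower v'")
      case True then show ?thesis using mixed[of v' v] False assms by metis
    next
      case False
      have "edgeP R v (sucP R v)" "edgeP R v' (sucP R v')"
        using VP_suc[OF Rs] assms \<open>\<not> Lower v\<close> False unfolding GT_def by auto
      then show ?thesis using edgeP_inj[OF Rs] assms(5) \<open>\<not> Lower v\<close> False unfolding fT_def by metis
    qed
  qed
qed

lemma GT_term_R: "\<not> Lower v \<Longrightarrow> v \<in> VR \<Longrightarrow> \<exists>n. (fT^^n) v \<in> Y"
proof (induction "rkP R v" arbitrary: v rule: less_induct)
  case less
  show ?case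
  proof (cases "v \<in> Y")
    case True then show ?thesis by (metis funpow_0)
  next
    case False
    have vG: "v \<in> GT" unfolding GT_def using less.prems by simp
    have e: "edgeP R v (sucP R v)" using VP_suc[OF Rs less.prems(2) False] .
    have f: "fT v = sucP R v" unfolding fT_def using less.prems by simp
    have "fT v \<in> GT" using GT_cl vG False by blast
    moreover have "\<not> Lower (fT v)" using nonlower_step e f less.prems by metis
    ultimately have "fT v \<in> VR" unfolding GT_def by simp
    moreover have "rkP R (fT v) < rkP R v" using edgeP_rk[OF Rs e] f by simp
    ultimately obtain n where "(fT^^n) (fT v) \<in> Y" using less.hyps \<open>\<not> Lower (fT v)\<close> by blast
    then have "(fT^^Suc n) v \<in> Y" by (simp add: funpow_Suc_right del: funpow.simps)
    then show ?thesis by blast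
  qed
qed

lemma GT_term_Q: "Lower v \<Longrightarrow> v \<in> VQ \<Longrightarrow> \<exists>n. (fT^^n) v \<in> Y"
proof (induction "rkP Q v" arbitrary: v rule: less_induct)
  case less
  show ?case
  proof (cases "v \<in> Y")
    case True then show ?thesis by (metis funpow_0)
  next
    case False
    have vG: "v \<in> GT" unfolding GT_def using less.prems by simp
    have e: "edgeP Q v (sucP Q v)" using VP_suc[OF Qs less.prems(2) False] .
    have f: "fT v = sucP Q v" unfolding fT_def using less.prems by simp
    have G: "fT v \<in> GT" using GT_cl vG False by blast
    have "\<exists>n. (fT^^n) (fT v) \<in> Y"
    proof (cases "Lower (fT v)")
      case True
      then have "fT v \<in> VQ" using G unfolding GT_def by simp
      moreover have "rkP Q (fT v) < rkP Q v" using edgeP_rk[OF Qs e] f by simp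
      ultimately show ?thesis using less.hyps True by blast
    next
      case False
      then have "fT v \<in> VR" using G unfolding GT_def by simp
      then show ?thesis using GT_term_R False by blast
    qed
    then obtain n where "(fT^^n) (fT v) \<in> Y" by blast
    then have "(fT^^Suc n) v \<in> Y" by (simp add: funpow_Suc_right del: funpow.simps)
    then show ?thesis by blast
  qed
qed

lemma separator_joining: "\<exists>T. T \<in> joinings V E X Y \<and> Vplus T \<subseteq> Vplus R"
proof -
  have StG: "X \<subseteq> GT"
  proof
    fix x assume x: "x \<in> X"
    then have xq: "x \<in> VQ" using X_VQ by blast
    show "x \<in> GT"
    proof (cases "Lower x")
      case True then show ?thesis using xq unfolding GT_def by simp
    next
      case False
      have "x \<notin> X1"
      proof
        assume "x \<in> X1"
        then have "visited x" unfolding visited_def Reach_def by simp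
        moreover have "x \<notin> Zs" using Z_VR X1_VR \<open>x \<in> X1\<close> by blast
        ultimately show False using False unfolding Lower_def by simp
      qed
      then have "x \<in> VR" using XmX1_VR x by blast
      then show ?thesis using False unfolding GT_def by simp
    qed
  qed
  have trm: "\<exists>n. (fT^^n) x \<in> Y" if "x \<in> X" for x
  proof -
    have "x \<in> GT" using StG that by blast
    then show ?thesis using GT_term_R GT_term_Q unfolding GT_def by blast
  qed
  have en: "fT v \<in> Vplus R" if "v \<in> GT" "v \<notin> Y" "fT v \<in> Y" for v
  proof -
    have "fT v \<in> GT" using GT_cl that by blast
    moreover have "\<not> Lower (fT v)" using Lower_notY that(3) by blast
    ultimately have "fT v \<in> VR" unfolding GT_def by simp
    then show ?thesis using VP_Y[OF Rs] that(3) by blast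
  qed
  have en2: "X \<inter> Y \<subseteq> Vplus R"
  proof
    fix x assume "x \<in> X \<inter> Y"
    then have "x \<in> VR" using X1Y XmX1_VR by blast
    then show "x \<in> Vplus R" using VP_Y[OF Rs] \<open>x \<in> X \<inter> Y\<close> by blast
  qed
  interpret T: orb V E X Y fT GT
    using GT_cl GT_inj by (intro orb.intro ctx_axioms orb_axioms.intro) blast+
  have "\<exists>T. AB_path_system V E X Y T \<and> Vminus T = X \<and> Vplus T \<subseteq> Vplus R"
  proof (rule T.extract_sys)
    show "X \<subseteq> X" by simp
    show "X \<subseteq> GT" by (rule StG)
    show "\<And>x. x \<in> X \<Longrightarrow> \<exists>n. (fT^^n) x \<in> Y" by (rule trm)
    show "\<And>v. v \<in> GT \<Longrightarrow> v \<notin> Y \<Longrightarrow> fT v \<in> Y \<Longrightarrow> fT v \<in> Vplus R" by (rule en)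
    show "X \<inter> Y \<subseteq> Vplus R" by (rule en2)
  qed
  then show ?thesis unfolding joinings_def by blast
qed

end

end

context aug begin

lemma shortcut:
  assumes w: "walk n u a" and kl: "k < l" "l \<le> n" and eq: "a k = a l"
  defines "d \<equiv> l - k"
  defines "u' \<equiv> (\<lambda>i. if i \<le> k then u i else u (i + d))"
  defines "a' \<equiv> (\<lambda>i. if i \<le> k then a i else a (i + d))"
  shows "walk (n - d) u' a' \<and> a' (n - d) = a n \<and> n - d < n"
proof -
  have d: "0 < d" "d \<le> n" "k + d = l" using kl unfolding d_def by auto
  have W1: "u 0 \<in> X1" and W2: "\<And>i. i \<le> n \<Longrightarrow> step_ok (u i) (a i)"
    and W3: "\<And>i. i < n \<Longrightarrow> cont_ok (a i) \<and> u (Suc i) = mR (a i)"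
    using w unfolding walk_def by auto
  have "walk (n - d) u' a'"
    unfolding walk_def
  proof (intro conjI allI impI)
    show "u' 0 \<in> X1" using W1 unfolding u'_def by simp
  next
    fix i assume i: "i \<le> n - d"
    show "step_ok (u' i) (a' i)"
    proof (cases "i \<le> k")
      case True then show ?thesis using W2[of i] kl unfolding u'_def a'_def by simp
    next
      case False then show ?thesis using W2[of "i + d"] i d unfolding u'_def a'_def by simp
    qed
  next
    fix i assume i: "i < n - d"
    have trich: "i < k \<or> i = k \<or> k < i" by linarith
    consider "i < k" | "i = k" | "k < i" by linarith
    then show "cont_ok (a' i)"
    proof cases
      case 1 then show ?thesis using W3[of i] kl unfolding a'_def by simp
    next
      case 2 then show ?thesis using W3[of l] i d eq unfolding a'_def by simp
    next
      case 3 then show ?thesis using W3[of "i + d"] i d unfolding a'_def by simp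
    qed
    from trich show "u' (Suc i) = mR (a' i)"
    proof (elim disjE)
      assume "i < k" then show ?thesis using W3[of i] kl unfolding a'_def u'_def by simp
    next
      assume "i = k"
      then have "u' (Suc i) = u (Suc l)" unfolding u'_def using d by simp
      also have "\<dots> = mR (a l)" using W3[of l] i d \<open>i = k\<close> by simp
      finally show ?thesis using eq \<open>i = k\<close> unfolding a'_def by simp
    next
      assume "k < i"
      then have "u' (Suc i) = u (Suc (i + d))" unfolding u'_def by simp
      also have "\<dots> = mR (a (i + d))" using W3[of "i + d"] i d by simp
      finally show ?thesis using \<open>k < i\<close> unfolding a'_def by simp
    qed
  qed
  moreover have "a' (n - d) = a n"
  proof (cases "n - d \<le> k")
    case True
    then have "n = l" "n - d = k" using d kl by auto
    then show ?thesis using eq True unfolding a'_def by simp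
  next
    case False then show ?thesis unfolding a'_def using d by simp
  qed
  ultimately show ?thesis using d by simp
qed

context
  fixes n :: nat and u a :: "nat \<Rightarrow> 'a"
  assumes w: "walk n u a" and anY: "a n \<in> Y" and anR: "a n \<notin> VR"
    and minimal: "\<And>n' u' a'. walk n' u' a' \<Longrightarrow> a' n' \<in> Y \<Longrightarrow> a' n' \<notin> VR \<Longrightarrow> n \<le> n'"
begin

lemma W1: "u 0 \<in> X1" and W2: "\<And>i. i \<le> n \<Longrightarrow> step_ok (u i) (a i)"
    and W3: "\<And>i. i < n \<Longrightarrow> cont_ok (a i) \<and> u (Suc i) = mR (a i)"
  using w unfolding walk_def by auto

lemma a_inj: assumes "k \<le> n" "l \<le> n" "a k = a l" shows "k = l"
proof (rule ccontr)
  assume "k \<noteq> l"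
  then consider "k < l" | "l < k" by linarith
  then show False
  proof cases
    case 1
    obtain u' a' n' where "walk n' u' a'" "a' n' = a n" "n' < n"
      using shortcut[OF w 1 assms(2,3)] by blast
    then show False using minimal anY anR by fastforce
  next
    case 2
    obtain u' a' n' where "walk n' u' a'" "a' n' = a n" "n' < n"
      using shortcut[OF w 2 assms(1) assms(3)[symmetric]] by blast
    then show False using minimal anY anR by fastforce
  qed
qed

lemma u_notY: "k \<le> n \<Longrightarrow> u k \<notin> Y" using W2 step_notY by blast

lemma a_notX: "k \<le> n \<Longrightarrow> a k \<notin> X" using W2 step_notX by blast

lemma u_inj: assumes "k \<le> n" "l \<le> n" "u k = u l" shows "k = l"
proof -
  have main: "k = l" if kl: "k < l" "l \<le> n" "u k = u l" for k l
  proof (cases k)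
    case 0
    obtain l' where l: "l = Suc l'" using kl by (cases l) auto
    have "cont_ok (a l')" "u l = mR (a l')" using W3[of l'] l that by auto
    moreover have "a l' \<notin> X" using a_notX l that by simp
    ultimately have "u l \<notin> X1" using mR_X1 by simp
    then show ?thesis using W1 0 that by simp
  next
    case (Suc k')
    obtain l' where l: "l = Suc l'" using kl by (cases l) auto
    have "mR (a k') = mR (a l')" using W3[of k'] W3[of l'] Suc l that by simp
    then have "a k' = a l'" using mR_inj a_notX Suc l that by simp
    then have "k' = l'" using a_inj Suc l that by simp
    then show ?thesis using Suc l by simp
  qed
  show ?thesis
  proof (cases "k < l")
    case True then show ?thesis using main assms by blast
  next
    case False
    then show ?thesis using main[of l k] assms by (metis nat_neq_iff)
  qed
qed

definition U :: "'a set" where "U = u ` {..n}"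
definition av :: "'a \<Rightarrow> 'a" where "av v = a (SOME k. k \<le> n \<and> u k = v)"
definition fA :: "'a \<Rightarrow> 'a" where "fA v = (if v \<in> U then av v else sucP R v)"
definition GA :: "'a set" where
  "GA = {v. \<exists>k\<le>n. v = u k \<and> a k \<noteq> u k} \<union> (VR - U) \<union> {a n}"

lemma finU: "finite U" unfolding U_def by simp

lemma av_eq: "k \<le> n \<Longrightarrow> av (u k) = a k"
proof -
  assume k: "k \<le> n"
  have "(SOME j. j \<le> n \<and> u j = u k) = k"
  proof (rule some_equality)
    show "k \<le> n \<and> u k = u k" using k by simp
  next
    fix j assume "j \<le> n \<and> u j = u k" then show "j = k" using u_inj k by blast
  qed
  then show ?thesis unfolding av_def by simp
qed

lemma fA_u: "k \<le> n \<Longrightarrow> fA (u k) = a k"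
  unfolding fA_def U_def using av_eq by auto

lemma fA_R: "v \<notin> U \<Longrightarrow> fA v = sucP R v" unfolding fA_def by simp

lemma ne_edge: "k \<le> n \<Longrightarrow> a k \<noteq> u k \<Longrightarrow> (u k, a k) \<in> E \<and> \<not> edgeP R (u k) (a k)"
  using W2 step_ne by blast

lemma eq_idle: "k \<le> n \<Longrightarrow> a k = u k \<Longrightarrow> u k \<in> VR \<and> u k \<notin> X"
  using W2 step_eq by metis

lemma idle_pre: assumes "j \<le> n" "a j = u j" shows "j < n \<and> u (Suc j) = preP R (u j)"
proof -
  have "u j \<in> VR" using eq_idle assms by blast
  then have "j \<noteq> n" using anR assms by auto
  then have "j < n" using assms by simp
  moreover have "u (Suc j) = mR (a j)" using W3 \<open>j < n\<close> by blast
  ultimately show ?thesis using assms \<open>u j \<in> VR\<close> unfolding mR_def by simp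
qed

lemma GA_cl: assumes "v \<in> GA" "v \<notin> Y" shows "(v, fA v) \<in> E \<and> fA v \<in> GA"
proof -
  consider (U) k where "k \<le> n" "v = u k" "a k \<noteq> u k" | (R) "v \<in> VR" "v \<notin> U"
    using assms anY unfolding GA_def by blast
  then show ?thesis
  proof cases
    case U
    have E: "(v, fA v) \<in> E" using ne_edge U fA_u by simp
    have "a k \<in> GA"
    proof (cases "k = n")
      case True then show ?thesis unfolding GA_def by simp
    next
      case False
      then have kn: "k < n" using U by simp
      have c: "cont_ok (a k)" "u (Suc k) = mR (a k)" using W3 kn by auto
      show ?thesis
      proof (cases "a k \<in> VR")
        case False
        then have uk: "u (Suc k) = a k" using c unfolding mR_def by simp
        have "a (Suc k) \<noteq> u (Suc k)"
        proof
          assume "a (Suc k) = u (Suc k)"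
          then have "u (Suc k) \<in> VR" using eq_idle kn by simp
          then show False using uk False by simp
        qed
        then show ?thesis unfolding GA_def using uk kn by (metis (mono_tags, lifting) Suc_leI UnI1 mem_Collect_eq)
      next
        case True
        show ?thesis
        proof (cases "a k \<in> U")
          case False then show ?thesis unfolding GA_def using True by simp
        next
          case True
          then obtain j where j: "j \<le> n" "a k = u j" unfolding U_def by auto
          have "a j \<noteq> u j"
          proof
            assume "a j = u j"
            then have "a j = a k" using j by simp
            then have "j = k" using a_inj j U by blast
            then show False using U j \<open>a j = u j\<close> by simp
          qed
          then show ?thesis unfolding GA_def using j by blast
        qed
      qed
    qed
    then show ?thesis using E fA_u U by simp
  next
    case R
    have e: "edgeP R v (sucP R v)" using VP_suc[OF Rs R(1) assms(2)] .
    have E: "(v, fA v) \<in> E" using edgeP_E[OF Rs e] fA_R R by simp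
    have wr: "sucP R v \<in> VR" using edgeP_VP[OF Rs e] by simp
    have "sucP R v \<in> GA"
    proof (cases "sucP R v \<in> U")
      case False then show ?thesis unfolding GA_def using wr by simp
    next
      case True
      then obtain j where j: "j \<le> n" "sucP R v = u j" unfolding U_def by auto
      have "a j \<noteq> u j"
      proof
        assume "a j = u j"
        then have "j < n" "u (Suc j) = preP R (u j)" using idle_pre j by auto
        moreover have "preP R (u j) = v" using preP_eq[OF Rs e] j by simp
        ultimately have "v \<in> U" unfolding U_def by auto
        then show False using R by simp
      qed
      then show ?thesis unfolding GA_def using j by blast
    qed
    then show ?thesis using E fA_R R by simp
  qed
qed

lemma GA_inj: assumes "v \<in> GA" "v' \<in> GA" "v \<notin> Y" "v' \<notin> Y" "fA v = fA v'" shows "v = v'"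
proof -
  have mixed: False if "k \<le> n" "v = u k" "v' \<in> VR" "v' \<notin> U" "v' \<notin> Y" "fA v = fA v'" for k v v'
  proof -
    have e: "edgeP R v' (sucP R v')" using VP_suc[OF Rs that(3,5)] .
    have eq: "a k = sucP R v'" using that fA_u fA_R by simp
    have "a k \<in> VR" using edgeP_VP[OF Rs e] eq by simp
    then have "k \<noteq> n" using anR by auto
    then have kn: "k < n" using that by simp
    have "u (Suc k) = mR (a k)" using W3 kn by blast
    also have "\<dots> = preP R (a k)" using \<open>a k \<in> VR\<close> unfolding mR_def by simp
    also have "\<dots> = v'" using preP_eq[OF Rs e] eq by simp
    finally have "v' \<in> U" unfolding U_def using kn by (metis Suc_leI atMost_iff image_eqI)
    then show False using that by simp
  qed
  consider (UU) k k' where "k \<le> n" "v = u k" "k' \<le> n" "v' = u k'"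
    | (UR) k where "k \<le> n" "v = u k" "v' \<in> VR" "v' \<notin> U"
    | (RU) k where "k \<le> n" "v' = u k" "v \<in> VR" "v \<notin> U"
    | (RR) "v \<in> VR" "v \<notin> U" "v' \<in> VR" "v' \<notin> U"
    using assms anY unfolding GA_def by blast
  then show ?thesis
  proof cases
    case UU
    then have "a k = a k'" using assms fA_u by simp
    then have "k = k'" using a_inj UU by blast
    then show ?thesis using UU by simp
  next
    case UR then show ?thesis using mixed assms by blast
  next
    case RU then show ?thesis using mixed[of k v' v] assms by metis
  next
    case RR
    have "edgeP R v (sucP R v)" "edgeP R v' (sucP R v')"
      using VP_suc[OF Rs] RR assms by auto
    then show ?thesis using edgeP_inj[OF Rs] assms(5) fA_R RR by metis
  qed
qed

definition StA :: "'a set" where "StA = (X - X1) \<union> {u 0}"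

lemma StA_X: "StA \<subseteq> X" unfolding StA_def using W1 X1X by auto

lemma StA_G: "StA \<subseteq> GA"
proof
  fix x assume x: "x \<in> StA"
  show "x \<in> GA"
  proof (cases "x = u 0")
    case True
    have "a 0 \<noteq> u 0"
    proof
      assume "a 0 = u 0"
      then have "u 0 \<in> VR" using eq_idle by simp
      then show False using X1_VR W1 by simp
    qed
    then show ?thesis unfolding GA_def using True by blast
  next
    case False
    then have xX: "x \<in> X - X1" using x unfolding StA_def by simp
    then have xr: "x \<in> VR" using XmX1_VR by blast
    show ?thesis
    proof (cases "x \<in> U")
      case True
      then obtain j where j: "j \<le> n" "x = u j" unfolding U_def by auto
      have "a j \<noteq> u j" using eq_idle j xX by blast
      then show ?thesis unfolding GA_def using j by blast
    next
      case False then show ?thesis unfolding GA_def using xr by simp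
    qed
  qed
qed

lemma GA_ends: assumes "v \<in> GA" "v \<notin> Y" "fA v \<in> Y" shows "fA v \<in> Vplus R \<union> {a n}"
proof -
  consider (U) k where "k \<le> n" "v = u k" | (R) "v \<in> VR" "v \<notin> U"
    using assms anY unfolding GA_def by blast
  then show ?thesis
  proof cases
    case U
    then have f: "fA v = a k" using fA_u by simp
    show ?thesis
    proof (cases "k = n")
      case True then show ?thesis using f by simp
    next
      case False
      then have "cont_ok (a k)" using W3 U by simp
      then have "a k \<in> VR" using assms f unfolding cont_ok_def by simp
      then show ?thesis using VP_Y[OF Rs] assms f by simp
    qed
  next
    case R
    have e: "edgeP R v (sucP R v)" using VP_suc[OF Rs R(1) assms(2)] .
    then have "fA v \<in> VR" using edgeP_VP[OF Rs e] fA_R R by simp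
    then show ?thesis using VP_Y[OF Rs] assms by simp
  qed
qed

lemma StA_ends: "StA \<inter> Y \<subseteq> Vplus R \<union> {a n}"
proof
  fix x assume x: "x \<in> StA \<inter> Y"
  have "x \<noteq> u 0" using u_notY[of 0] x by auto
  then have "x \<in> X - X1" using x unfolding StA_def by simp
  then have "x \<in> VR" using XmX1_VR by blast
  then show "x \<in> Vplus R \<union> {a n}" using VP_Y[OF Rs] x by simp
qed

lemma GA_orb: "orb V E X Y fA GA"
  using GA_cl GA_inj by (intro orb.intro ctx_axioms orb_axioms.intro) blast+

lemma GA_term: assumes x: "x \<in> StA" shows "\<exists>m. (fA^^m) x \<in> Y"
proof (rule ccontr)
  interpret O: orb V E X Y fA GA by (rule GA_orb)
  assume "\<not> (\<exists>m. (fA^^m) x \<in> Y)"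
  then have nY: "\<And>m. (fA^^m) x \<notin> Y" by blast
  have xG: "x \<in> GA" "x \<in> X" using StA_G StA_X x by auto
  have orbG: "(fA^^m) x \<in> GA" for m
  proof -
    have "\<forall>k<m. (fA^^k) x \<notin> Y" using nY by blast
    then show ?thesis by (rule O.orbit_G[OF xG(1)])
  qed
  have injo: "inj (\<lambda>m. (fA^^m) x)"
  proof (rule injI)
    have A: "i = j" if ij: "i \<le> j" "(fA^^i) x = (fA^^j) x" for i j
    proof -
      have k1: "\<forall>k<i. (fA^^k) x \<notin> Y" "\<forall>k<j. (fA^^k) x \<notin> Y" "\<forall>k<j-i. (fA^^k) x \<notin> Y"
        using nY by simp_all
      have e: "x = (fA^^(j - i)) x"
        using O.backtrack[OF xG(1) xG(1) k1(1) k1(2) ij(1) ij(2)] .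
      have "j - i = 0" using O.orbit_src[OF xG(2) xG(1) k1(3) e] .
      then show ?thesis using ij by simp
    qed
    fix i j assume "(fA^^i) x = (fA^^j) x"
    then show "i = j" using A[of i j] A[of j i] by (cases "i \<le> j") auto
  qed
  have "finite ((\<lambda>m. (fA^^m) x) -` U)" using finite_vimageI[OF finU injo] .
  then obtain N where N: "\<And>m. m \<in> (\<lambda>m. (fA^^m) x) -` U \<Longrightarrow> m < N"
    unfolding finite_nat_set_iff_bounded by blast
  have outU: "(fA^^m) x \<notin> U" if "N \<le> m" for m
  proof
    assume "(fA^^m) x \<in> U"
    then have "m < N" using N by simp
    then show False using that by simp
  qed
  have inR: "(fA^^m) x \<in> VR" if "N \<le> m" for m
  proof -
    have g: "(fA^^m) x \<in> GA" by (rule orbG)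
    have nu: "(fA^^m) x \<notin> U" using outU that by blast
    have na: "(fA^^m) x \<noteq> a n" using nY[of m] anY by metis
    have uU: "\<And>k. k \<le> n \<Longrightarrow> u k \<in> U" unfolding U_def by simp
    from g consider (a) k where "k \<le> n" "(fA^^m) x = u k" | (b) "(fA^^m) x \<in> VR - U"
      | (c) "(fA^^m) x = a n"
      unfolding GA_def by blast
    then show ?thesis
    proof cases
      case a then show ?thesis using nu uU by metis
    next
      case b then show ?thesis by simp
    next
      case c then show ?thesis using na by simp
    qed
  qed
  have dec: "rkP R ((fA^^(N + m)) x) + m \<le> rkP R ((fA^^N) x)" for m
  proof (induction m)
    case 0 then show ?case by simp
  next
    case (Suc m)
    let ?v = "(fA^^(N + m)) x"
    have vr: "?v \<in> VR" using inR[of "N + m"] by simp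
    have e: "edgeP R ?v (sucP R ?v)" using VP_suc[OF Rs vr nY] .
    have "?v \<notin> U" using outU[of "N + m"] by simp
    then have "fA ?v = sucP R ?v" using fA_R by blast
    then have "(fA^^(N + Suc m)) x = sucP R ?v" by simp
    then have "rkP R ((fA^^(N + Suc m)) x) < rkP R ?v" using edgeP_rk[OF Rs e] by simp
    then show ?case using Suc.IH by simp
  qed
  then show False using dec[of "Suc (rkP R ((fA^^N) x))"] by simp
qed

lemma aug_result: "\<exists>R'. AB_path_system V E X Y R' \<and> Vminus R' = (X - X1) \<union> {u 0} \<and> Vplus R' \<subseteq> Vplus R \<union> {a n}"
proof -
  interpret O: orb V E X Y fA GA by (rule GA_orb)
  have "\<exists>R'. AB_path_system V E X Y R' \<and> Vminus R' = StA \<and> Vplus R' \<subseteq> Vplus R \<union> {a n}"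
  proof (rule O.extract_sys)
    show "StA \<subseteq> X" by (rule StA_X)
    show "StA \<subseteq> GA" by (rule StA_G)
    show "\<And>x. x \<in> StA \<Longrightarrow> \<exists>n. (fA^^n) x \<in> Y" by (rule GA_term)
    show "\<And>v. v \<in> GA \<Longrightarrow> v \<notin> Y \<Longrightarrow> fA v \<in> Y \<Longrightarrow> fA v \<in> Vplus R \<union> {a n}" by (rule GA_ends)
    show "StA \<inter> Y \<subseteq> Vplus R \<union> {a n}" by (rule StA_ends)
  qed
  then show ?thesis unfolding StA_def .
qed

end

lemma success_aug:
  assumes "success"
  shows "\<exists>R' x y. x \<in> X1 \<and> y \<in> Y \<and> y \<notin> Vplus R \<and> AB_path_system V E X Y R' \<and>
     Vminus R' = (X - X1) \<union> {x} \<and> Vplus R' \<subseteq> Vplus R \<union> {y}"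
proof -
  let ?P = "\<lambda>n. \<exists>u a. walk n u a \<and> a n \<in> Y \<and> a n \<notin> VR"
  obtain n0 where "?P n0" using assms unfolding success_def by blast
  then obtain n where n: "?P n" "\<And>m. ?P m \<Longrightarrow> n \<le> m"
    using ex_has_least_nat[of ?P n0 "\<lambda>x. x"] by blast
  then obtain u a where w: "walk n u a" "a n \<in> Y" "a n \<notin> VR" by blast
  have min: "\<And>n' u' a'. walk n' u' a' \<Longrightarrow> a' n' \<in> Y \<Longrightarrow> a' n' \<notin> VR \<Longrightarrow> n \<le> n'"
    using n(2) by blast
  have "\<exists>R'. AB_path_system V E X Y R' \<and> Vminus R' = (X - X1) \<union> {u 0} \<and> Vplus R' \<subseteq> Vplus R \<union> {a n}"
  proof (rule aug_result[OF w])
    fix n' u' a' assume "walk n' u' a'" "a' n' \<in> Y" "a' n' \<notin> VR"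
    then show "n \<le> n'" by (rule min)
  qed
  then obtain R' where R': "AB_path_system V E X Y R'" "Vminus R' = (X - X1) \<union> {u 0}" "Vplus R' \<subseteq> Vplus R \<union> {a n}"
    by blast
  have "u 0 \<in> X1" using w(1) unfolding walk_def by simp
  moreover have "a n \<notin> Vplus R" using w(3) Vplus_VP[OF Rs] by blast
  ultimately show ?thesis using w(2) R' by blast
qed

end

context ctx begin

lemma core:
  assumes Qj: "Q \<in> joinings V E X Y"
  shows "finite X1 \<Longrightarrow> X1 \<subseteq> X \<Longrightarrow> AB_path_system V E X Y R \<Longrightarrow> Vminus R = X - X1 \<Longrightarrow>
    finite B \<Longrightarrow> B \<subseteq> Y - Vplus R \<Longrightarrow> card X1 < card B \<Longrightarrow> \<exists>T\<in>joinings V E X Y. Vplus T \<noteq> Y"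
proof (induction "card X1" arbitrary: X1 R B rule: less_induct)
  case less
  interpret A: aug V E X Y Q R X1
    using less.prems Qj by (intro aug.intro ctx_axioms aug_axioms.intro) auto
  have IH: "\<And>X1' R' B'. card X1' < card X1 \<Longrightarrow> finite X1' \<Longrightarrow> X1' \<subseteq> X \<Longrightarrow>
    AB_path_system V E X Y R' \<Longrightarrow> Vminus R' = X - X1' \<Longrightarrow> finite B' \<Longrightarrow> B' \<subseteq> Y - Vplus R' \<Longrightarrow>
    card X1' < card B' \<Longrightarrow> \<exists>T\<in>joinings V E X Y. Vplus T \<noteq> Y"
    using less.hyps by blast
  have step: "\<exists>T\<in>joinings V E X Y. Vplus T \<noteq> Y"
    if x: "x \<in> X1" and R': "AB_path_system V E X Y R'" "Vminus R' = (X - X1) \<union> {x}"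
      "Vplus R' \<subseteq> Vplus R \<union> {y}" for x y R'
  proof -
    have c1: "card (X1 - {x}) < card X1" using x less.prems(1)
      by (meson card_Diff1_less)
    have c2: "card (X1 - {x}) = card X1 - 1" using x less.prems(1) by simp
    have c3: "card B - 1 \<le> card (B - {y})" using less.prems(5) by (simp add: card_Diff_singleton_if)
    have "card X1 \<ge> 1" using x less.prems(1) by (metis One_nat_def Suc_leI card_gt_0_iff empty_iff)
    then have c4: "card (X1 - {x}) < card (B - {y})" using c2 c3 less.prems(7) by linarith
    have m: "Vminus R' = X - (X1 - {x})" using R'(2) x less.prems(2) by auto
    have b: "B - {y} \<subseteq> Y - Vplus R'" using less.prems(6) R'(3) by auto
    have f1: "finite (X1 - {x})" using less.prems(1) by simp
    have f2: "X1 - {x} \<subseteq> X" using less.prems(2) by auto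
    have f3: "finite (B - {y})" using less.prems(5) by simp
    show ?thesis using IH[OF c1 f1 f2 R'(1) m f3 b c4] .
  qed
  consider (trivY) x where "x \<in> X1" "x \<in> Y" | (succ) "X1 \<inter> Y = {}" "A.success"
    | (sep) "X1 \<inter> Y = {}" "\<not> A.success" by blast
  then show ?case
  proof cases
    case trivY
    have xV: "x \<in> V" using trivY less.prems(2) XV by blast
    have xR: "x \<notin> A.VR" using A.X1_VR trivY by blast
    have p: "AB_path V E X Y [x]"
      unfolding AB_path_def dpath_def using xV trivY less.prems(2) by auto
    have sys: "AB_path_system V E X Y (insert [x] R)"
      unfolding AB_path_system_def
    proof (intro conjI ballI impI)
      fix p assume "p \<in> insert [x] R"
      then show "AB_path V E X Y p" using p Pp[OF less.prems(3)] by auto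
    next
      fix p q assume pq: "p \<in> insert [x] R" "q \<in> insert [x] R" "p \<noteq> q"
      have d: "set r \<inter> set [x] = {}" if "r \<in> R" for r using xR that unfolding VP_def by auto
      show "set p \<inter> set q = {}"
      proof (cases "p = [x]")
        case True
        then have "q \<in> R" using pq by auto
        then show ?thesis using d True by auto
      next
        case False
        then have pR: "p \<in> R" using pq by auto
        show ?thesis
        proof (cases "q = [x]")
          case True then show ?thesis using d pR by auto
        next
          case False
          then have "q \<in> R" using pq by auto
          then show ?thesis using pR pq less.prems(3) unfolding AB_path_system_def by blast
        qed
      qed
    qed
    have "Vminus (insert [x] R) = (X - X1) \<union> {x}" using less.prems(4) unfolding Vminus_def by auto
    moreover have "Vplus (insert [x] R) \<subseteq> Vplus R \<union> {x}" unfolding Vplus_def by auto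
    ultimately show ?thesis using step[OF trivY(1) sys] by blast
  next
    case succ
    then obtain R' x y where "x \<in> X1" "y \<in> Y" "y \<notin> Vplus R" "AB_path_system V E X Y R'"
      "Vminus R' = (X - X1) \<union> {x}" "Vplus R' \<subseteq> Vplus R \<union> {y}"
      using A.success_aug by blast
    then show ?thesis using step by blast
  next
    case sep
    obtain T where T: "T \<in> joinings V E X Y" "Vplus T \<subseteq> Vplus R"
      using A.separator_joining sep by blast
    have "B \<noteq> {}" using less.prems(7) by auto
    then obtain b where "b \<in> B" by blast
    then have "b \<in> Y" "b \<notin> Vplus T" using less.prems(6) T(2) by auto
    then show ?thesis using T(1) by blast
  qed
qed

end

lemma AB_path_mono: "AB_path V' E' A B p \<Longrightarrow> V' \<subseteq> V \<Longrightarrow> E' \<subseteq> E \<Longrightarrow> AB_path V E A B p"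
  unfolding AB_path_def dpath_def by blast

theorem lemma4p4:
  fixes V :: "'a set" and E :: "('a \<times> 'a) set"
    and X Y S :: "'a set" and F :: "('a \<times> 'a) set"
  assumes "digraph V E"
    and "X \<subseteq> V" and "Y \<subseteq> V"
    and "\<forall>x\<in>X. \<forall>u. (u, x) \<notin> E"
    and "\<forall>y\<in>Y. \<forall>w. (y, w) \<notin> E"
    and "S \<subseteq> V" and "finite S"
    and "F \<subseteq> E \<inter> ((V - S) \<times> (V - S))" and "finite F"
    and "X \<subseteq> V - S" and "Y \<subseteq> V - S"
    and "incompressible (V - S) (E \<inter> ((V - S) \<times> (V - S)) - F) X Y"
  shows "incompressible V E X Y"
proof -
  define V' where "V' = V - S"
  define E' where "E' = E \<inter> ((V - S) \<times> (V - S)) - F"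
  have inc: "incompressible V' E' X Y" using assms(12) unfolding V'_def E'_def .
  interpret C: ctx V' E' X Y
  proof
    show "digraph V' E'" using assms(1) unfolding digraph_def V'_def E'_def by auto
    show "X \<subseteq> V'" using assms(10) unfolding V'_def .
    show "\<forall>x\<in>X. \<forall>u. (u, x) \<notin> E'" using assms(4) unfolding E'_def by auto
    show "\<forall>y\<in>Y. \<forall>w. (y, w) \<notin> E'" using assms(5) unfolding E'_def by auto
  qed
  have VV: "V' \<subseteq> V" "E' \<subseteq> E" unfolding V'_def E'_def by auto
  obtain Q where Q: "Q \<in> joinings V' E' X Y" using inc unfolding incompressible_def joinable_def by blast
  have QD: "Q \<in> joinings V E X Y"
    using Q AB_path_mono[OF _ VV] unfolding joinings_def AB_path_system_def by blast
  have "Vplus P = Y" if P: "P \<in> joinings V E X Y" for P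
  proof (rule ccontr)
    assume ne: "Vplus P \<noteq> Y"
    have Ps: "AB_path_system V E X Y P" "Vminus P = X" using P unfolding joinings_def by auto
    have Pp: "\<And>p. p \<in> P \<Longrightarrow> AB_path V E X Y p" using Ps unfolding AB_path_system_def by auto
    have disj: "\<And>p q. p \<in> P \<Longrightarrow> q \<in> P \<Longrightarrow> p \<noteq> q \<Longrightarrow> set p \<inter> set q = {}"
      using Ps unfolding AB_path_system_def by auto
    have "Vplus P \<subseteq> Y" unfolding Vplus_def using Pp ABp_D(6) by blast
    then obtain y0 where y0: "y0 \<in> Y" "y0 \<notin> Vplus P" using ne by blast
    define Bad where "Bad = {p \<in> P. \<not> AB_path V' E' X Y p}"
    define W where "W = S \<union> fst ` F"
    have finW: "finite W" unfolding W_def using assms(7,9) by simp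
    have wit: "\<exists>w\<in>W. w \<in> set p" if "p \<in> Bad" for p
    proof (rule ccontr)
      assume nw: "\<not> (\<exists>w\<in>W. w \<in> set p)"
      have pp: "AB_path V E X Y p" using that Pp unfolding Bad_def by auto
      have sV: "set p \<subseteq> V'" using ABp_D(3)[OF pp] nw unfolding V'_def W_def by auto
      have "(p ! i, p ! Suc i) \<in> E'" if i: "Suc i < length p" for i
      proof -
        have e: "(p ! i, p ! Suc i) \<in> E" using ABp_D(4)[OF pp i] .
        have "p ! i \<in> V'" "p ! Suc i \<in> V'" using sV i by auto
        moreover have "(p ! i, p ! Suc i) \<notin> F"
        proof
          assume "(p ! i, p ! Suc i) \<in> F"
          then have "p ! i \<in> W" unfolding W_def by force
          then show False using nw i by auto
        qed
        ultimately show ?thesis using e unfolding E'_def V'_def by auto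
      qed
      then have "AB_path V' E' X Y p" using pp sV unfolding AB_path_def dpath_def by auto
      then show False using that unfolding Bad_def by simp
    qed
    define g where "g p = (SOME w. w \<in> W \<and> w \<in> set p)" for p
    have g: "g p \<in> W \<and> g p \<in> set p" if "p \<in> Bad" for p
      unfolding g_def using wit[OF that] by (metis (mono_tags, lifting) someI)
    have "inj_on g Bad"
    proof (rule inj_onI)
      fix p q assume pq: "p \<in> Bad" "q \<in> Bad" "g p = g q"
      then have "set p \<inter> set q \<noteq> {}" using g by fastforce
      then show "p = q" using disj pq unfolding Bad_def by blast
    qed
    moreover have "g ` Bad \<subseteq> W" using g by auto
    ultimately have finBad: "finite Bad" using finW by (meson finite_imageD finite_subset)
    have hdinj: "inj_on hd P"
    proof (rule inj_onI)
      fix p q assume pq: "p \<in> P" "q \<in> P" "hd p = hd q"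
      show "p = q"
      proof (rule ccontr)
        assume "p \<noteq> q"
        then have "set p \<inter> set q = {}" using disj pq by blast
        moreover have "p \<noteq> []" "q \<noteq> []" using ABp_D(1)[OF Pp[OF pq(1)]] ABp_D(1)[OF Pp[OF pq(2)]] by auto
        then have "hd p \<in> set p" "hd q \<in> set q" by auto
        ultimately show False using pq by auto
      qed
    qed
    have lastinj: "inj_on last P"
    proof (rule inj_onI)
      fix p q assume pq: "p \<in> P" "q \<in> P" "last p = last q"
      show "p = q"
      proof (rule ccontr)
        assume "p \<noteq> q"
        then have "set p \<inter> set q = {}" using disj pq by blast
        moreover have "p \<noteq> []" "q \<noteq> []" using ABp_D(1)[OF Pp[OF pq(1)]] ABp_D(1)[OF Pp[OF pq(2)]] by auto
        then have "last p \<in> set p" "last q \<in> set q" by auto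
        ultimately show False using pq by auto
      qed
    qed
    define R where "R = P - Bad"
    define X1 where "X1 = hd ` Bad"
    define B where "B = insert y0 (last ` Bad)"
    have BadP: "Bad \<subseteq> P" unfolding Bad_def by auto
    have Rs: "AB_path_system V' E' X Y R"
      using disj unfolding AB_path_system_def R_def Bad_def by auto
    have RX: "Vminus R = X - X1"
    proof -
      have "Vminus R = hd ` P - hd ` Bad" unfolding Vminus_def R_def
        using inj_on_image_set_diff[OF hdinj _ BadP] by simp
      then show ?thesis using Ps(2) unfolding Vminus_def X1_def by simp
    qed
    have finX1: "finite X1" unfolding X1_def using finBad by simp
    have X1X: "X1 \<subseteq> X" unfolding X1_def using BadP Pp ABp_D(5) by blast
    have cX1: "card X1 = card Bad" unfolding X1_def using card_image inj_on_subset[OF hdinj BadP] by blast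
    have y0B: "y0 \<notin> last ` Bad" using y0(2) BadP unfolding Vplus_def by blast
    have cB: "card B = Suc (card Bad)" unfolding B_def using finBad y0B
      card_image[OF inj_on_subset[OF lastinj BadP]] by simp
    have finB: "finite B" unfolding B_def using finBad by simp
    have BY: "B \<subseteq> Y - Vplus R"
    proof
      fix b assume "b \<in> B"
      then consider "b = y0" | p where "p \<in> Bad" "b = last p" unfolding B_def by blast
      then show "b \<in> Y - Vplus R"
      proof cases
        case 1 then show ?thesis using y0 unfolding Vplus_def R_def by auto
      next
        case 2
        have "b \<in> Y" using 2 BadP Pp ABp_D(6) by blast
        moreover have "b \<notin> Vplus R"
        proof
          assume "b \<in> Vplus R"
          then obtain q where "q \<in> R" "b = last q" unfolding Vplus_def by auto
          then have "q = p" using lastinj 2 BadP unfolding R_def inj_on_def by blast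
          then show False using \<open>q \<in> R\<close> 2 unfolding R_def by simp
        qed
        ultimately show ?thesis by simp
      qed
    qed
    have "card X1 < card B" using cX1 cB by simp
    then obtain T where T: "T \<in> joinings V' E' X Y" "Vplus T \<noteq> Y"
      using C.core[OF Q finX1 X1X Rs RX finB BY] by blast
    then show False using inc unfolding incompressible_def by blast
  qed
  moreover have "joinable V E X Y" using QD unfolding joinable_def by blast
  ultimately show ?thesis unfolding incompressible_def by blast
qed

end
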